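(* Let $\mathcal T\subseteq2^X$ be closed under taking supersets and contain all cocircuits. Then there is an isomorphism of $S[\mathfrak g^*]$-modules $D_{\mathcal T}(X)\cong Hom_{\mathbb{R}}(D^*_{\mathcal T}(X),\mathbb{R})$.
   Context: $G$ is a compact torus of dimension $d$, $\Gamma$ its character lattice, $V=\Gamma\otimes\mathbb{R}=\mathfrak g^*$, $S[\mathfrak g^*]\cong\mathbb{R}[x_1,\dots,x_d]$ the symmetric algebra of $V$. $X$ is a finite list of nonzero elements of $\Gamma$ spanning $V$; a cocircuit is the sublist of elements of $X$ not in a hyperplane spanned by elements of $X$. $D_{\mathcal T}(X)=\{f:V\to\mathbb{R}\text{ smooth}:\partial_Af=0\ \forall A\in\mathcal T\}$ where $\partial_A=\prod_{a\in A}\partial_a$, an $S[\mathfrak g^*]$-module with $v\in V$ acting by $\partial_v$. $D^*_{\mathcal T}(X)=S[\mathfrak g^*]/(\prod_{a\in A}a:\ A\in\mathcal T)$. $Hom_{\mathbb{R}}(N,\mathbb{R})$ is a module via $(p\phi)(n)=\phi(pn)$. *)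

theory Defs
  imports "HOL-Analysis.Analysis" "HOL-Library.Poly_Mapping"
begin

text \<open>V = real^'n (so d = CARD('n)), the symmetric algebra S[V] is the polynomial ring
  in the coordinate variables x_i, modelled as finitely supported maps from monomials
  (exponent vectors 'n =>0 nat) to real coefficients.\<close>

type_synonym 'n spoly = "('n \<Rightarrow>\<^sub>0 nat) \<Rightarrow>\<^sub>0 real"

definition pconst :: "real \<Rightarrow> 'n spoly" where
  "pconst c = Poly_Mapping.single 0 c"

definition pvar :: "'n \<Rightarrow> 'n spoly" where
  "pvar i = Poly_Mapping.single (Poly_Mapping.single i 1) 1"

definition lin :: "real^'n \<Rightarrow> 'n spoly" where
  "lin v = (\<Sum>i\<in>UNIV. pconst (v $ i) * pvar i)"

definition ddir :: "real^'n \<Rightarrow> (real^'n \<Rightarrow> real) \<Rightarrow> (real^'n \<Rightarrow> real)" where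
  "ddir v f = (\<lambda>x. frechet_derivative f (at x) v)"

coinductive smooth :: "(real^'n \<Rightarrow> real) \<Rightarrow> bool" where
  "(\<forall>x. f differentiable (at x)) \<Longrightarrow> (\<forall>v. smooth (ddir v f)) \<Longrightarrow> smooth f"

definition dirs :: "(real^'n) list \<Rightarrow> (real^'n \<Rightarrow> real) \<Rightarrow> (real^'n \<Rightarrow> real)" where
  "dirs vs f = foldr ddir vs f"

definition coord_list :: "'n::finite list" where
  "coord_list = (SOME xs. set xs = UNIV \<and> distinct xs)"

definition dmon :: "('n::finite \<Rightarrow>\<^sub>0 nat) \<Rightarrow> (real^'n \<Rightarrow> real) \<Rightarrow> (real^'n \<Rightarrow> real)" where
  "dmon m f = dirs (concat (map (\<lambda>i. replicate (Poly_Mapping.lookup m i) (axis i 1)) coord_list)) f"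

text \<open>Action of p in S[V] on functions: p(\<partial>) f.\<close>
definition pact :: "'n::finite spoly \<Rightarrow> (real^'n \<Rightarrow> real) \<Rightarrow> (real^'n \<Rightarrow> real)" where
  "pact p f = (\<lambda>x. \<Sum>m\<in>Poly_Mapping.keys p. Poly_Mapping.lookup p m * dmon m f x)"

text \<open>Sublists of X are represented by sets of indices into X.\<close>
definition cocircuit :: "(real^'n) list \<Rightarrow> nat set \<Rightarrow> bool" where
  "cocircuit X C \<longleftrightarrow> (\<exists>S H. S \<subseteq> set X \<and> H = span S \<and> dim H = CARD('n) - 1 \<and>
      C = {i. i < length X \<and> X ! i \<notin> H})"

definition D_T :: "(real^'n) list \<Rightarrow> nat set set \<Rightarrow> (real^'n \<Rightarrow> real) set" where
  "D_T X T = {f. smooth f \<and> (\<forall>A\<in>T. dirs (map (\<lambda>i. X ! i) (sorted_list_of_set A)) f = (\<lambda>x. 0))}"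

definition prodA :: "(real^'n) list \<Rightarrow> nat set \<Rightarrow> 'n::finite spoly" where
  "prodA X A = (\<Prod>i\<in>A. lin (X ! i))"

definition ideal_gen :: "'n spoly set \<Rightarrow> 'n spoly set" where
  "ideal_gen G = {\<Sum>g\<in>F. q g * g | F q. finite F \<and> F \<subseteq> G}"

text \<open>Hom_R(D*_T(X), R) = Hom_R(S[V]/I, R), I = (prodA X A : A \<in> T), identified with
  the R-linear functionals on S[V] vanishing on I.\<close>
definition Hom_DstarT :: "(real^'n) list \<Rightarrow> nat set set \<Rightarrow> ('n::finite spoly \<Rightarrow> real) set" where
  "Hom_DstarT X T = {\<phi>. (\<forall>p q. \<phi> (p + q) = \<phi> p + \<phi> q) \<and> (\<forall>c p. \<phi> (pconst c * p) = c * \<phi> p)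
      \<and> (\<forall>p\<in>ideal_gen (prodA X ` T). \<phi> p = 0)}"

end

theory Submission
  imports Defs
begin


lemma smooth_differentiable: "smooth f \<Longrightarrow> f differentiable (at x)"
  by (erule smooth.cases) auto

lemma smooth_ddir: "smooth f \<Longrightarrow> smooth (ddir v f)"
  by (erule smooth.cases) auto

lemma ddir_has_derivative:
  "f differentiable (at x) \<Longrightarrow> (f has_derivative (\<lambda>h. ddir h f x)) (at x)"
  unfolding ddir_def using frechet_derivative_works by (metis eta_contract_eq)

lemma ddir_eqI: "(f has_derivative f') (at x) \<Longrightarrow> ddir h f x = f' h"
  unfolding ddir_def using frechet_derivative_at by metis

lemma ddir_linear_v:
  assumes "f differentiable (at x)"
  shows "ddir (a *\<^sub>R u + b *\<^sub>R w) f x = a * ddir u f x + b * ddir w f x"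
proof -
  have "linear (\<lambda>h. ddir h f x)" using has_derivative_linear[OF ddir_has_derivative[OF assms]] .
  then show ?thesis by (simp add: linear_iff)
qed

lemma ddir_lin_f:
  assumes "\<forall>x. f differentiable (at x)" "\<forall>x. g differentiable (at x)"
  shows "ddir v (\<lambda>x. a * f x + b * g x) = (\<lambda>x. a * ddir v f x + b * ddir v g x)"
proof
  fix x
  have "((\<lambda>x. a * f x + b * g x) has_derivative (\<lambda>h. a * ddir h f x + b * ddir h g x)) (at x)"
    using assms by (auto intro!: derivative_eq_intros ddir_has_derivative)
  then show "ddir v (\<lambda>x. a * f x + b * g x) x = a * ddir v f x + b * ddir v g x"
    by (rule ddir_eqI)
qed


lemma smooth_const: "smooth (\<lambda>x. c)"
proof -
  have "\<exists>c. h = (\<lambda>x. c)  \<Longrightarrow> smooth h" for h :: "real^'n \<Rightarrow> real"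
  proof (coinduction arbitrary: h rule: smooth.coinduct)
    case (smooth h)
    then obtain c where h: "h = (\<lambda>x. c)" by auto
    have "ddir v h = (\<lambda>x. 0)" for v
      unfolding h by (rule ext, rule ddir_eqI[OF has_derivative_const])
    then show ?case unfolding h by auto
  qed
  then show ?thesis by auto
qed


lemma smooth_coI:
  assumes "P f" "\<And>h. P h \<Longrightarrow> (\<forall>x. h differentiable (at x)) \<and> (\<forall>v. P (ddir v h) \<or> smooth (ddir v h))"
  shows "smooth f"
  using assms(1) by (rule smooth.coinduct) (use assms(2) in blast)

lemma smooth_lin:
  assumes "smooth f" "smooth g"
  shows "smooth (\<lambda>x. a * f x + b * g x)"
proof (rule smooth_coI[where P="\<lambda>h. \<exists>a b f g. h = (\<lambda>x. a * f x + b * g x) \<and> smooth f \<and> smooth g"])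
  show "\<exists>a' b' f' g'. (\<lambda>x. a * f x + b * g x) = (\<lambda>x. a' * f' x + b' * g' x) \<and> smooth f' \<and> smooth g'"
    using assms by blast
next
  fix h :: "real^'a \<Rightarrow> real"
  assume "\<exists>a b f g. h = (\<lambda>x. a * f x + b * g x) \<and> smooth f \<and> smooth g"
  then obtain a b f g where h: "h = (\<lambda>x. a * f x + b * g x)" and s: "smooth f" "smooth g" by auto
  have d: "\<forall>x. f differentiable (at x)" "\<forall>x. g differentiable (at x)"
    using s smooth_differentiable by auto
  have dh: "ddir v h = (\<lambda>x. a * ddir v f x + b * ddir v g x)" for v
    unfolding h by (rule ddir_lin_f[OF d])
  have hd: "h differentiable (at x)" for x
    unfolding h using d by (intro differentiable_add differentiable_mult differentiable_const) auto
  have "\<exists>a b f' g'. ddir v h = (\<lambda>x. a * f' x + b * g' x) \<and> smooth f' \<and> smooth g'" for v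
    using dh[of v] smooth_ddir[OF s(1), of v] smooth_ddir[OF s(2), of v] by blast
  then show "(\<forall>x. h differentiable (at x)) \<and> (\<forall>v. (\<exists>a b f g. ddir v h = (\<lambda>x. a * f x + b * g x) \<and> smooth f \<and> smooth g) \<or> smooth (ddir v h))"
    using hd by blast
qed

lemma smooth_add: "smooth f \<Longrightarrow> smooth g \<Longrightarrow> smooth (\<lambda>x. f x + g x)"
  using smooth_lin[of f g 1 1] by simp

lemma smooth_cmult: "smooth f \<Longrightarrow> smooth (\<lambda>x. c * f x)"
  using smooth_lin[of f f c 0] by simp

lemma smooth_sum: "(\<And>i. i \<in> I \<Longrightarrow> smooth (f i)) \<Longrightarrow> smooth (\<lambda>x. \<Sum>i\<in>I. f i x)"
proof (induction I rule: infinite_finite_induct)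
  case (infinite A) then show ?case by (simp add: smooth_const)
next
  case empty then show ?case by (simp add: smooth_const)
next
  case (insert x F) then show ?case by (simp add: smooth_add)
qed


lemma mvt_line:
  assumes "\<forall>y. h differentiable (at y)" "s > 0"
  shows "\<exists>t. 0 < t \<and> t < s \<and> h (y + s *\<^sub>R w) - h y = s * ddir w h (y + t *\<^sub>R w)"
proof -
  have "DERIV (\<lambda>t. h (y + t *\<^sub>R w)) t :> ddir w h (y + t *\<^sub>R w)" for t
  proof -
    have l: "linear (\<lambda>k. ddir k h (y + t *\<^sub>R w))"
      using has_derivative_linear[OF ddir_has_derivative] assms(1) by blast
    have "((\<lambda>t. h (y + t *\<^sub>R w)) has_derivative (\<lambda>r. ddir (r *\<^sub>R w) h (y + t *\<^sub>R w))) (at t)"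
    proof -
      have a: "((\<lambda>t. t *\<^sub>R w + y) has_derivative (\<lambda>r. r *\<^sub>R w)) (at t)"
        by (rule has_derivative_add_const[OF bounded_linear_imp_has_derivative[OF bounded_linear_scaleR_left]])
      have b: "(h has_derivative (\<lambda>k. ddir k h (t *\<^sub>R w + y))) (at (t *\<^sub>R w + y))"
        using assms(1) ddir_has_derivative by blast
      show ?thesis using has_derivative_compose[OF a b] by (simp add: add.commute)
    qed
    moreover have "(\<lambda>r. ddir (r *\<^sub>R w) h (y + t *\<^sub>R w)) = (*) (ddir w h (y + t *\<^sub>R w))"
      using l by (auto simp: linear_iff)
    ultimately show ?thesis by (simp add: has_field_derivative_def)
  qed
  note D = this
  obtain z where "0 < z" "z < s"
    "h (y + s *\<^sub>R w) - h (y + 0 *\<^sub>R w) = (s - 0) * ddir w h (y + z *\<^sub>R w)"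
    using MVT2[OF assms(2), of "\<lambda>t. h (y + t *\<^sub>R w)" "\<lambda>t. ddir w h (y + t *\<^sub>R w)"] D by blast
  then show ?thesis by auto
qed



lemma shift_has_derivative:
  assumes "f differentiable (at (z + c))"
  shows "((\<lambda>y. f (y + c)) has_derivative (\<lambda>k. ddir k f (z + c))) (at z)"
  using has_derivative_compose[OF has_derivative_add_const[OF has_derivative_ident, of c "at z"]
      ddir_has_derivative[OF assms]] by simp

lemma delta_mvt:
  fixes f :: "real^'n \<Rightarrow> real"
  assumes "smooth f" "s > 0"
  shows "\<exists>p. norm (p - x) \<le> s * (norm u + norm v) \<and>
    f (x + s *\<^sub>R u + s *\<^sub>R v) - f (x + s *\<^sub>R u) - f (x + s *\<^sub>R v) + f x = s^2 * ddir v (ddir u f) p"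
proof -
  define h where "h = (\<lambda>y. f (y + s *\<^sub>R v) - f y)"
  have fd: "\<forall>y. f differentiable (at y)" using assms(1) smooth_differentiable by blast
  have hd: "(h has_derivative (\<lambda>k. ddir k f (z + s *\<^sub>R v) - ddir k f z)) (at z)" for z
    unfolding h_def using fd
    by (intro has_derivative_diff shift_has_derivative ddir_has_derivative) auto
  have hdiff: "\<forall>y. h differentiable (at y)" using hd differentiable_def by blast
  obtain t where t: "0 < t" "t < s" "h (x + s *\<^sub>R u) - h x = s * ddir u h (x + t *\<^sub>R u)"
    using mvt_line[OF hdiff assms(2)] by blast
  have e1: "ddir u h z = ddir u f (z + s *\<^sub>R v) - ddir u f z" for z
    using ddir_eqI[OF hd] .
  have Dud: "\<forall>y. (ddir u f) differentiable (at y)"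
    using smooth_differentiable[OF smooth_ddir[OF assms(1)]] by blast
  obtain r where r: "0 < r" "r < s"
    "ddir u f ((x + t *\<^sub>R u) + s *\<^sub>R v) - ddir u f (x + t *\<^sub>R u) = s * ddir v (ddir u f) ((x + t *\<^sub>R u) + r *\<^sub>R v)"
    using mvt_line[OF Dud assms(2)] by blast
  define p where "p = x + t *\<^sub>R u + r *\<^sub>R v"
  have "norm (p - x) \<le> norm (t *\<^sub>R u) + norm (r *\<^sub>R v)"
  proof -
    have "p - x = t *\<^sub>R u + r *\<^sub>R v" unfolding p_def by simp
    then show ?thesis using norm_triangle_ineq[of "t *\<^sub>R u" "r *\<^sub>R v"] by metis
  qed
  also have "\<dots> = t * norm u + r * norm v" using t r by simp
  also have "\<dots> \<le> s * norm u + s * norm v"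
    using t r by (intro add_mono mult_right_mono) auto
  finally have np: "norm (p - x) \<le> s * (norm u + norm v)" by (simp add: algebra_simps)
  have "f (x + s *\<^sub>R u + s *\<^sub>R v) - f (x + s *\<^sub>R u) - f (x + s *\<^sub>R v) + f x
      = h (x + s *\<^sub>R u) - h x" unfolding h_def by simp
  also have "\<dots> = s * (s * ddir v (ddir u f) p)"
    using t(3) e1 r(3) unfolding p_def by simp
  finally show ?thesis using np by (auto simp: power2_eq_square)
qed

lemma ddir_sym:
  fixes f :: "real^'n \<Rightarrow> real"
  assumes "smooth f"
  shows "ddir u (ddir v f) x = ddir v (ddir u f) x"
proof (rule ccontr)
  define A where "A = ddir v (ddir u f)"
  define B where "B = ddir u (ddir v f)"
  assume ne: "ddir u (ddir v f) x \<noteq> ddir v (ddir u f) x"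
  then have ne: "A x \<noteq> B x" unfolding A_def B_def by simp
  define e where "e = \<bar>A x - B x\<bar> / 2"
  have e: "e > 0" using ne unfolding e_def by simp
  have cA: "continuous (at x) A" unfolding A_def
    by (intro differentiable_imp_continuous_within smooth_differentiable smooth_ddir assms)
  have cB: "continuous (at x) B" unfolding B_def
    by (intro differentiable_imp_continuous_within smooth_differentiable smooth_ddir assms)
  obtain d1 where d1: "d1 > 0" "\<forall>y. dist y x < d1 \<longrightarrow> dist (A y) (A x) < e"
    using cA e unfolding continuous_at_eps_delta by blast
  obtain d2 where d2: "d2 > 0" "\<forall>y. dist y x < d2 \<longrightarrow> dist (B y) (B x) < e"
    using cB e unfolding continuous_at_eps_delta by blast
  define s where "s = min d1 d2 / (norm u + norm v + 1)"
  have pos: "norm u + norm v + 1 > 0" using norm_ge_zero[of u] norm_ge_zero[of v] by linarith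
  have s: "s > 0" using d1 d2 pos unfolding s_def by (intro divide_pos_pos) auto
  have sb: "s * (norm u + norm v) < min d1 d2"
  proof -
    have "s * (norm u + norm v) < s * (norm u + norm v + 1)" using s by simp
    also have "\<dots> = min d1 d2" unfolding s_def using pos by simp
    finally show ?thesis .
  qed
  obtain p where p: "norm (p - x) \<le> s * (norm u + norm v)"
    "f (x + s *\<^sub>R u + s *\<^sub>R v) - f (x + s *\<^sub>R u) - f (x + s *\<^sub>R v) + f x = s^2 * A p"
    using delta_mvt[OF assms s, of x u v] unfolding A_def by blast
  obtain q where q: "norm (q - x) \<le> s * (norm v + norm u)"
    "f (x + s *\<^sub>R v + s *\<^sub>R u) - f (x + s *\<^sub>R v) - f (x + s *\<^sub>R u) + f x = s^2 * B q"
    using delta_mvt[OF assms s, of x v u] unfolding B_def by blast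
  have "s^2 * A p = s^2 * B q" using p(2) q(2) by (simp add: algebra_simps)
  then have Apq: "A p = B q" using s by simp
  have "dist p x < d1" "dist q x < d2" using p(1) q(1) sb by (auto simp: dist_norm algebra_simps)
  then have "dist (A p) (A x) < e" "dist (B q) (B x) < e" using d1 d2 by auto
  then have "\<bar>A x - B x\<bar> < 2 * e" using Apq by (simp add: dist_real_def)
  then show False unfolding e_def by simp
qed



lemma dirs_Nil[simp]: "dirs [] f = f" by (simp add: dirs_def)
lemma dirs_Cons[simp]: "dirs (v # vs) f = ddir v (dirs vs f)" by (simp add: dirs_def)
lemma dirs_append: "dirs (xs @ ys) f = dirs xs (dirs ys f)" by (simp add: dirs_def)

lemma smooth_dirs: "smooth f \<Longrightarrow> smooth (dirs vs f)"
  by (induction vs) (auto simp: smooth_ddir)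

lemma dirs_ddir_comm:
  fixes g :: "real^'n \<Rightarrow> real"
  shows "smooth g \<Longrightarrow> dirs L (ddir x g) = ddir x (dirs L g)"
proof (induction L)
  case Nil show ?case by simp
next
  case (Cons y L)
  have "dirs (y#L) (ddir x g) = ddir y (ddir x (dirs L g))" using Cons by simp
  also have "\<dots> = ddir x (ddir y (dirs L g))"
    by (rule ext, rule ddir_sym[OF smooth_dirs[OF Cons.prems]])
  finally show ?case by simp
qed

lemma dirs_perm:
  fixes f :: "real^'n \<Rightarrow> real"
  shows "smooth f \<Longrightarrow> mset L = mset L' \<Longrightarrow> dirs L f = dirs L' f"
proof (induction L arbitrary: L')
  case Nil then show ?case by simp
next
  case (Cons x L1)
  have "x \<in> set L'" using Cons.prems(2) by (metis list.set_intros(1) set_mset_mset)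
  then obtain L2 L3 where L': "L' = L2 @ x # L3" by (meson split_list)
  have "mset L1 = mset (L2 @ L3)" using Cons.prems(2) L' by simp
  then have e: "dirs L1 f = dirs (L2 @ L3) f" using Cons.IH Cons.prems(1) by blast
  have "dirs L' f = dirs L2 (ddir x (dirs L3 f))" by (simp add: L' dirs_append)
  also have "\<dots> = ddir x (dirs L2 (dirs L3 f))"
    by (rule dirs_ddir_comm[OF smooth_dirs[OF Cons.prems(1)]])
  also have "\<dots> = ddir x (dirs L1 f)" using e by (simp add: dirs_append)
  finally show ?case by simp
qed

lemma dirs_lin:
  assumes "smooth f" "smooth g"
  shows "dirs L (\<lambda>x. a * f x + b * g x) = (\<lambda>x. a * dirs L f x + b * dirs L g x)"
proof (induction L)
  case Nil then show ?case by simp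
next
  case (Cons v L)
  have d: "\<forall>x. dirs L f differentiable (at x)" "\<forall>x. dirs L g differentiable (at x)"
    using smooth_differentiable smooth_dirs assms by blast+
  show ?case using Cons.IH ddir_lin_f[OF d] by simp
qed

lemma dirs_zero: "dirs L (\<lambda>x. 0) = (\<lambda>x. 0)"
  using dirs_lin[OF smooth_const smooth_const, of L 0 0 0 0] by simp

lemma dirs_sum:
  assumes "\<And>i. i \<in> I \<Longrightarrow> smooth (f i)"
  shows "dirs L (\<lambda>x. \<Sum>i\<in>I. c i * f i x) = (\<lambda>x. \<Sum>i\<in>I. c i * dirs L (f i) x)"
  using assms
proof (induction I rule: infinite_finite_induct)
  case (infinite A) then show ?case by (simp add: dirs_zero)
next
  case empty then show ?case by (simp add: dirs_zero)
next
  case (insert i F)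
  have s: "smooth (\<lambda>x. \<Sum>i\<in>F. c i * f i x)"
    using insert.prems by (intro smooth_sum smooth_cmult) auto
  have "dirs L (\<lambda>x. \<Sum>i\<in>insert i F. c i * f i x) = dirs L (\<lambda>x. c i * f i x + 1 * (\<Sum>i\<in>F. c i * f i x))"
    using insert.hyps by simp
  also have "\<dots> = (\<lambda>x. c i * dirs L (f i) x + 1 * dirs L (\<lambda>x. \<Sum>i\<in>F. c i * f i x) x)"
    by (rule dirs_lin[OF _ s]) (use insert.prems in auto)
  also have "\<dots> = (\<lambda>x. \<Sum>i\<in>insert i F. c i * dirs L (f i) x)"
    using insert by simp
  finally show ?case .
qed

lemma ddir_sum_v:
  assumes "f differentiable (at x)"
  shows "ddir (\<Sum>j\<in>J. c j *\<^sub>R w j) f x = (\<Sum>j\<in>J. c j * ddir (w j) f x)"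
proof -
  have l: "linear (\<lambda>h. ddir h f x)" using has_derivative_linear[OF ddir_has_derivative[OF assms]] .
  show ?thesis using linear_sum[OF l, of "\<lambda>j. c j *\<^sub>R w j" J] l
    by (simp add: o_def linear_iff)
qed

lemma coord_list: "set (coord_list :: 'n::finite list) = UNIV" "distinct (coord_list :: 'n::finite list)"
proof -
  have "\<exists>xs::'n list. set xs = UNIV \<and> distinct xs" using finite_distinct_list[of "UNIV :: 'n set"] by simp
  then have "set (coord_list :: 'n list) = UNIV \<and> distinct (coord_list :: 'n list)"
    unfolding coord_list_def by (rule someI_ex)
  then show "set (coord_list :: 'n::finite list) = UNIV" "distinct (coord_list :: 'n::finite list)" by auto
qed

definition mlist :: "('n::finite \<Rightarrow>\<^sub>0 nat) \<Rightarrow> (real^'n) list" where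
  "mlist m = concat (map (\<lambda>i. replicate (Poly_Mapping.lookup m i) (axis i 1)) coord_list)"

lemma dmon_mlist: "dmon m f = dirs (mlist m) f" by (simp add: dmon_def mlist_def)

lemma mset_mlist: "mset (mlist m) = (\<Sum>i\<in>UNIV. replicate_mset (Poly_Mapping.lookup m i) (axis i 1))"
proof -
  have "mset (mlist m) = sum_list (map (\<lambda>i. replicate_mset (Poly_Mapping.lookup m i) (axis i 1)) coord_list)"
    unfolding mlist_def mset_concat by (simp add: o_def)
  also have "\<dots> = (\<Sum>i\<in>set coord_list. replicate_mset (Poly_Mapping.lookup m i) (axis i 1))"
    by (rule sum_list_distinct_conv_sum_set[OF coord_list(2)])
  finally show ?thesis by (simp add: coord_list(1))
qed

lemma smooth_dmon: "smooth f \<Longrightarrow> smooth (dmon m f)"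
  by (simp add: dmon_mlist smooth_dirs)

lemma replicate_mset_plus': "replicate_mset (a + b) x = replicate_mset a x + replicate_mset b x"
  by (induction a) auto

lemma dmon_add: "smooth f \<Longrightarrow> dmon (a + b) f = dmon a (dmon b f)"
proof -
  assume f: "smooth f"
  have "mset (mlist (a + b)) = mset (mlist a @ mlist b)"
    by (simp add: mset_mlist lookup_add replicate_mset_plus' sum.distrib)
  then show ?thesis unfolding dmon_mlist dirs_append[symmetric] using dirs_perm[OF f] by blast
qed

lemma concat_map_Nil: "concat (map (\<lambda>i. []) xs) = []" by (induction xs) auto

lemma dmon_zero: "dmon 0 f = f"
  by (simp add: dmon_def concat_map_Nil)

lemma dmon_single: "smooth f \<Longrightarrow> dmon (Poly_Mapping.single i 1) f = ddir (axis i 1) f"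
proof -
  assume f: "smooth f"
  have e: "(\<lambda>j. replicate_mset (Poly_Mapping.lookup (Poly_Mapping.single i 1) j) (axis j 1)) = (\<lambda>j. if j = i then {#axis i 1#} else 0)"
    by (auto simp: lookup_single when_def)
  have "mset (mlist (Poly_Mapping.single i 1)) = mset [axis i 1]"
    unfolding mset_mlist e by simp
  then have "dmon (Poly_Mapping.single i 1) f = dirs [axis i 1] f"
    unfolding dmon_mlist using dirs_perm[OF f] by blast
  then show ?thesis by simp
qed

lemma dmon_sum:
  assumes "\<And>i. i \<in> I \<Longrightarrow> smooth (f i)"
  shows "dmon m (\<lambda>x. \<Sum>i\<in>I. c i * f i x) = (\<lambda>x. \<Sum>i\<in>I. c i * dmon m (f i) x)"
  unfolding dmon_mlist by (rule dirs_sum[OF assms])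

lemma pact_K:
  assumes "finite K" "Poly_Mapping.keys p \<subseteq> K"
  shows "pact p f x = (\<Sum>m\<in>K. Poly_Mapping.lookup p m * dmon m f x)"
  unfolding pact_def
  by (rule sum.mono_neutral_left[OF assms]) (auto simp: in_keys_iff)

lemma pact_add: "pact (p + q) f = (\<lambda>x. pact p f x + pact q f x)"
proof
  fix x
  define K where "K = Poly_Mapping.keys p \<union> Poly_Mapping.keys q"
  have K: "finite K" unfolding K_def by simp
  have "Poly_Mapping.keys (p + q) \<subseteq> K" unfolding K_def by (rule keys_add)
  then have 1: "pact (p + q) f x = (\<Sum>m\<in>K. Poly_Mapping.lookup (p + q) m * dmon m f x)" by (rule pact_K[OF K])
  have 2: "pact p f x = (\<Sum>m\<in>K. Poly_Mapping.lookup p m * dmon m f x)" by (rule pact_K[OF K]) (auto simp: K_def)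
  have 3: "pact q f x = (\<Sum>m\<in>K. Poly_Mapping.lookup q m * dmon m f x)" by (rule pact_K[OF K]) (auto simp: K_def)
  show "pact (p + q) f x = pact p f x + pact q f x"
    unfolding 1 2 3 by (simp add: lookup_add algebra_simps sum.distrib)
qed

lemma pact_zero: "pact 0 f = (\<lambda>x. 0)"
  by (simp add: pact_def)

lemma pact_single: "pact (Poly_Mapping.single m c) f = (\<lambda>x. c * dmon m f x)"
proof
  fix x
  show "pact (Poly_Mapping.single m c) f x = c * dmon m f x"
    using pact_K[of "{m}" "Poly_Mapping.single m c" f x] by simp
qed

lemma pact_sum: "pact (\<Sum>i\<in>I. P i) f = (\<lambda>x. \<Sum>i\<in>I. pact (P i) f x)"
proof (induction I rule: infinite_finite_induct)
  case (infinite A) then show ?case by (simp add: pact_zero)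
next
  case empty then show ?case by (simp add: pact_zero)
next
  case (insert x F) then show ?case by (simp add: pact_add)
qed

lemma poly_expand: "p = (\<Sum>m\<in>Poly_Mapping.keys p. Poly_Mapping.single m (Poly_Mapping.lookup p m))"
proof (rule poly_mapping_eqI)
  fix k
  show "Poly_Mapping.lookup p k = Poly_Mapping.lookup (\<Sum>m\<in>Poly_Mapping.keys p. Poly_Mapping.single m (Poly_Mapping.lookup p m)) k"
    by (simp add: lookup_sum lookup_single when_def in_keys_iff)
qed

lemma poly_mult_expand:
  "p * q = (\<Sum>a\<in>Poly_Mapping.keys p. \<Sum>b\<in>Poly_Mapping.keys q. Poly_Mapping.single (a + b) (Poly_Mapping.lookup p a * Poly_Mapping.lookup q b))"
proof -
  have "p * q = (\<Sum>a\<in>Poly_Mapping.keys p. Poly_Mapping.single a (Poly_Mapping.lookup p a)) * (\<Sum>b\<in>Poly_Mapping.keys q. Poly_Mapping.single b (Poly_Mapping.lookup q b))"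
    using poly_expand[of p] poly_expand[of q] by simp
  also have "\<dots> = (\<Sum>a\<in>Poly_Mapping.keys p. \<Sum>b\<in>Poly_Mapping.keys q. Poly_Mapping.single (a + b) (Poly_Mapping.lookup p a * Poly_Mapping.lookup q b))"
    by (simp add: sum_product mult_single)
  finally show ?thesis .
qed

lemma pact_mult:
  fixes f :: "real^'n::finite \<Rightarrow> real"
  assumes f: "smooth f"
  shows "pact (p * q) f = pact p (pact q f)"
proof
  fix x
  have "pact (p * q) f x = (\<Sum>a\<in>Poly_Mapping.keys p. \<Sum>b\<in>Poly_Mapping.keys q. Poly_Mapping.lookup p a * Poly_Mapping.lookup q b * dmon (a + b) f x)"
    by (subst poly_mult_expand) (simp add: pact_sum pact_single)
  also have "\<dots> = (\<Sum>a\<in>Poly_Mapping.keys p. Poly_Mapping.lookup p a * (\<Sum>b\<in>Poly_Mapping.keys q. Poly_Mapping.lookup q b * dmon a (dmon b f) x))"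
    by (simp add: dmon_add[OF f] sum_distrib_left mult.assoc)
  also have "\<dots> = (\<Sum>a\<in>Poly_Mapping.keys p. Poly_Mapping.lookup p a * dmon a (pact q f) x)"
  proof -
    have "dmon a (pact q f) = (\<lambda>x. \<Sum>b\<in>Poly_Mapping.keys q. Poly_Mapping.lookup q b * dmon a (dmon b f) x)" for a
      unfolding pact_def[of q f] by (rule dmon_sum) (use f smooth_dmon in auto)
    then show ?thesis by simp
  qed
  also have "\<dots> = pact p (pact q f) x" by (simp add: pact_def)
  finally show "pact (p * q) f x = pact p (pact q f) x" .
qed

lemma smooth_pact: "smooth f \<Longrightarrow> smooth (pact p f)"
  unfolding pact_def by (intro smooth_sum smooth_cmult smooth_dmon)

lemma pconst_mult: "pconst c * p = (\<Sum>m\<in>Poly_Mapping.keys p. Poly_Mapping.single m (c * Poly_Mapping.lookup p m))"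
proof -
  have "pconst c * p = pconst c * (\<Sum>m\<in>Poly_Mapping.keys p. Poly_Mapping.single m (Poly_Mapping.lookup p m))"
    using poly_expand[of p] by simp
  then show ?thesis by (simp add: sum_distrib_left pconst_def mult_single)
qed

lemma pact_pconst: "pact (pconst c * p) f = (\<lambda>x. c * pact p f x)"
proof -
  have "pact (pconst c * p) f = (\<lambda>x. \<Sum>m\<in>Poly_Mapping.keys p. c * Poly_Mapping.lookup p m * dmon m f x)"
    by (simp add: pconst_mult pact_sum pact_single)
  also have "\<dots> = (\<lambda>x. c * pact p f x)"
    by (simp add: pact_def sum_distrib_left mult.assoc)
  finally show ?thesis .
qed

lemma pact_one: "pact 1 f = f"
proof -
  have "(1 :: 'a::finite spoly) = Poly_Mapping.single 0 1" by simp
  moreover have "pact (Poly_Mapping.single 0 1) f = f" unfolding pact_single dmon_zero by simp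
  ultimately show ?thesis by simp
qed



lemma pconst_add: "pconst (a + b) = pconst a + pconst b"
  by (simp add: pconst_def single_add)

lemma pconst_mult_pconst: "pconst (a * b) = pconst a * pconst b"
  by (simp add: pconst_def mult_single)

lemma pconst_0[simp]: "pconst 0 = 0" by (simp add: pconst_def)
lemma pconst_1[simp]: "pconst 1 = 1" by (simp add: pconst_def)

lemma lin_single: "lin v = (\<Sum>i\<in>UNIV. Poly_Mapping.single (Poly_Mapping.single i 1) (v $ i))"
  by (simp add: lin_def pconst_def pvar_def mult_single)

lemma lin_add: "lin (a + b) = lin a + lin b"
  by (simp add: lin_def pconst_add algebra_simps sum.distrib)

lemma lin_scale: "lin (c *\<^sub>R a) = pconst c * lin a"
  by (simp add: lin_def pconst_mult_pconst sum_distrib_left mult.assoc)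

lemma lin_zero[simp]: "lin 0 = 0"
  by (simp add: lin_def)

lemma lin_sum: "lin (\<Sum>j\<in>J. c j *\<^sub>R w j) = (\<Sum>j\<in>J. pconst (c j) * lin (w j))"
proof (induction J rule: infinite_finite_induct)
  case (infinite A) then show ?case by simp
next
  case empty then show ?case by simp
next
  case (insert x F) then show ?case by (simp add: lin_add lin_scale)
qed

lemma pact_lin:
  fixes f :: "real^'n::finite \<Rightarrow> real"
  assumes f: "smooth f"
  shows "pact (lin v) f = ddir v f"
proof
  fix x
  have "pact (lin v) f x = (\<Sum>i\<in>UNIV. v $ i * ddir (axis i 1) f x)"
  proof -
    have "dmon (Poly_Mapping.single i (Suc 0)) f = ddir (axis i 1) f" for i
      using dmon_single[OF f, of i] by simp
    then show ?thesis by (simp add: lin_single pact_sum pact_single)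
  qed
  also have "\<dots> = ddir (\<Sum>i\<in>UNIV. (v $ i) *\<^sub>R axis i 1) f x"
    by (rule ddir_sum_v[symmetric]) (rule smooth_differentiable[OF f])
  also have "(\<Sum>i\<in>UNIV. (v $ i) *\<^sub>R axis i 1) = v"
    using basis_expansion[of v] by (simp add: scalar_mult_eq_scaleR)
  finally show "pact (lin v) f x = ddir v f x" .
qed

lemma pact_prod_list:
  fixes f :: "real^'n::finite \<Rightarrow> real"
  assumes f: "smooth f"
  shows "pact (prod_list (map lin L)) f = dirs L f"
proof (induction L)
  case Nil then show ?case by (simp add: pact_one)
next
  case (Cons a L)
  have "pact (prod_list (map lin (a # L))) f = pact (lin a) (pact (prod_list (map lin L)) f)"
    by (simp add: pact_mult[OF f])
  also have "\<dots> = pact (lin a) (dirs L f)" by (simp only: Cons.IH)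
  also have "\<dots> = ddir a (dirs L f)" by (rule pact_lin[OF smooth_dirs[OF f]])
  finally show ?case by simp
qed

lemma prodA_list: "finite A \<Longrightarrow> prodA X A = prod_list (map lin (map (\<lambda>i. X ! i) (sorted_list_of_set A)))"
proof -
  assume A: "finite A"
  have "prodA X A = (\<Prod>i\<in>set (sorted_list_of_set A). lin (X ! i))" using A by (simp add: prodA_def)
  also have "\<dots> = prod_list (map (\<lambda>i. lin (X ! i)) (sorted_list_of_set A))"
    by (rule prod.distinct_set_conv_list) simp
  finally show ?thesis by (simp add: o_def)
qed

lemma pact_prodA:
  fixes f :: "real^'n::finite \<Rightarrow> real"
  assumes "smooth f" "finite A"
  shows "pact (prodA X A) f = dirs (map (\<lambda>i. X ! i) (sorted_list_of_set A)) f"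
  using pact_prod_list[OF assms(1), of "map (\<lambda>i. X ! i) (sorted_list_of_set A)"] prodA_list[OF assms(2), of X] by simp

lemma dmon_zero_fun: "dmon m (\<lambda>x. 0) = (\<lambda>x. 0)"
  by (simp add: dmon_mlist dirs_zero)

lemma pact_zero_fun: "pact p (\<lambda>x. 0) = (\<lambda>x. 0)"
  by (simp add: pact_def dmon_zero_fun)

lemma pact_ideal:
  fixes f :: "real^'n::finite \<Rightarrow> real"
  assumes f: "smooth f" and G: "\<forall>g\<in>G. pact g f = (\<lambda>x. 0)" and p: "p \<in> ideal_gen G"
  shows "pact p f = (\<lambda>x. 0)"
proof -
  obtain F q where p: "p = (\<Sum>g\<in>F. q g * g)" "finite F" "F \<subseteq> G"
    using p unfolding ideal_gen_def by blast
  have "pact (q g * g) f = (\<lambda>x. 0)" if "g \<in> F" for g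
    using that p(3) G by (simp add: pact_mult[OF f] pact_zero_fun subset_iff)
  then show ?thesis unfolding p(1) pact_sum by simp
qed

lemma ideal_gen_gen: "g \<in> G \<Longrightarrow> g \<in> ideal_gen G"
  unfolding ideal_gen_def
  by (rule CollectI, rule exI[of _ "{g}"], rule exI[of _ "\<lambda>_. 1"]) simp

lemma ideal_gen_zero: "0 \<in> ideal_gen G"
  unfolding ideal_gen_def
  by (rule CollectI, rule exI[of _ "{}"], rule exI[of _ "\<lambda>_. 1"]) simp

lemma ideal_gen_mult: "p \<in> ideal_gen G \<Longrightarrow> r * p \<in> ideal_gen G"
proof -
  assume "p \<in> ideal_gen G"
  then obtain F q where p: "p = (\<Sum>g\<in>F. q g * g)" "finite F" "F \<subseteq> G"
    unfolding ideal_gen_def by blast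
  have "r * p = (\<Sum>g\<in>F. (r * q g) * g)" unfolding p(1) by (simp add: sum_distrib_left mult.assoc)
  then show ?thesis unfolding ideal_gen_def
    by (intro CollectI exI[of _ F] exI[of _ "\<lambda>g. r * q g"]) (use p(2,3) in simp)
qed

lemma ideal_gen_add: "p \<in> ideal_gen G \<Longrightarrow> p' \<in> ideal_gen G \<Longrightarrow> p + p' \<in> ideal_gen G"
proof -
  assume "p \<in> ideal_gen G" "p' \<in> ideal_gen G"
  then obtain F q F' q' where p: "p = (\<Sum>g\<in>F. q g * g)" "finite F" "F \<subseteq> G"
    and p': "p' = (\<Sum>g\<in>F'. q' g * g)" "finite F'" "F' \<subseteq> G"
    unfolding ideal_gen_def by blast
  define Q where "Q g = (if g \<in> F then q g else 0) + (if g \<in> F' then q' g else 0)" for g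
  have fu: "finite (F \<union> F')" using p(2) p'(2) by simp
  have "(\<Sum>g\<in>F \<union> F'. Q g * g) = (\<Sum>g\<in>F \<union> F'. (if g \<in> F then q g else 0) * g) + (\<Sum>g\<in>F \<union> F'. (if g \<in> F' then q' g else 0) * g)"
    unfolding Q_def by (simp add: algebra_simps sum.distrib)
  also have "(\<Sum>g\<in>F \<union> F'. (if g \<in> F then q g else 0) * g) = (\<Sum>g\<in>F. q g * g)"
    by (rule sum.mono_neutral_cong_right[OF fu]) auto
  also have "(\<Sum>g\<in>F \<union> F'. (if g \<in> F' then q' g else 0) * g) = (\<Sum>g\<in>F'. q' g * g)"
    by (rule sum.mono_neutral_cong_right[OF fu]) auto
  finally have "p + p' = (\<Sum>g\<in>F \<union> F'. Q g * g)" using p(1) p'(1) by simp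
  then show ?thesis unfolding ideal_gen_def
    by (intro CollectI exI[of _ "F \<union> F'"] exI[of _ Q]) (use fu p(3) p'(3) in simp)
qed

lemma ideal_gen_sum: "(\<And>i. i \<in> I \<Longrightarrow> P i \<in> ideal_gen G) \<Longrightarrow> (\<Sum>i\<in>I. P i) \<in> ideal_gen G"
proof (induction I rule: infinite_finite_induct)
  case (infinite A) then show ?case by (simp add: ideal_gen_zero)
next
  case empty then show ?case by (simp add: ideal_gen_zero)
next
  case (insert x F) then show ?case by (simp add: ideal_gen_add)
qed



lemma span_repr:
  fixes f :: "'i \<Rightarrow> real^'n"
  assumes "finite A" "x \<in> span (f ` A)"
  shows "\<exists>c. x = (\<Sum>j\<in>A. c j *\<^sub>R f j)"
  using assms(2)
proof (induction rule: span_induct_alt)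
  case base
  show ?case by (rule exI[of _ "\<lambda>_. 0"]) simp
next
  case (step c x y)
  then obtain j0 where j0: "j0 \<in> A" "x = f j0" by blast
  from step obtain d where d: "y = (\<Sum>j\<in>A. d j *\<^sub>R f j)" by blast
  have "c *\<^sub>R x + y = (\<Sum>j\<in>A. (d j + (if j = j0 then c else 0)) *\<^sub>R f j)"
    unfolding d j0(2) using j0(1) assms(1)
    by (simp add: scaleR_add_left sum.distrib if_distrib[of "\<lambda>t. t *\<^sub>R f _"] cong: if_cong)
  then show ?case by (intro exI[of _ "\<lambda>j. d j + (if j = j0 then c else 0)"])
qed

lemma hyper_exists:
  fixes X :: "(real^'n) list"
  assumes U: "U \<subseteq> set X" "span U \<noteq> UNIV" and sp: "span (set X) = UNIV"
  shows "\<exists>S'\<subseteq>set X. U \<subseteq> span S' \<and> dim (span S') = CARD('n) - 1"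
proof -
  obtain B0 where B0: "B0 \<subseteq> U" "independent B0" "U \<subseteq> span B0"
    using maximal_independent_subset[of U] by blast
  obtain B where B: "B0 \<subseteq> B" "B \<subseteq> set X" "independent B" "set X \<subseteq> span B"
    using maximal_independent_subset_extend[of B0 "set X"] B0 U(1) by blast
  have fB: "finite B" using B(2) finite_subset by blast
  have spB: "span B = UNIV"
    using B(4) sp by (metis span_mono span_span top.extremum_uniqueI)
  have cB: "card B = CARD('n)"
    using dim_span_eq_card_independent[OF B(3)] spB by simp
  have "B0 \<noteq> B"
  proof
    assume "B0 = B"
    then have "span U = UNIV" using B0 spB
      by (metis span_minimal span_mono subset_antisym subset_UNIV subspace_span)
    then show False using U(2) by simp
  qed
  then obtain b where b: "b \<in> B" "b \<notin> B0" using B(1) by blast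
  define S' where "S' = B - {b}"
  have indS: "independent S'" unfolding S'_def using B(3) by (rule independent_mono) auto
  have "dim (span S') = card S'" by (rule dim_span_eq_card_independent[OF indS])
  also have "\<dots> = CARD('n) - 1" unfolding S'_def using fB b cB by simp
  finally have d: "dim (span S') = CARD('n) - 1" .
  have "U \<subseteq> span S'"
  proof -
    have "B0 \<subseteq> S'" unfolding S'_def using B(1) b by blast
    then have "span B0 \<subseteq> span S'" by (rule span_mono)
    then show ?thesis using B0(3) by blast
  qed
  moreover have "S' \<subseteq> set X" unfolding S'_def using B(2) by blast
  ultimately show ?thesis using d by blast
qed



definition Pm :: "(real^'n) list \<Rightarrow> (nat \<Rightarrow> nat) \<Rightarrow> 'n::finite spoly" where
  "Pm X \<mu> = (\<Prod>j<length X. lin (X ! j) ^ \<mu> j)"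

lemma prod_upd:
  assumes "finite A" "j \<in> A"
  shows "(\<Prod>k\<in>A. g k ^ (\<mu>(j := v)) k) = g j ^ v * (\<Prod>k\<in>A - {j}. g k ^ \<mu> k)"
proof -
  have "(\<Prod>k\<in>A. g k ^ (\<mu>(j := v)) k) = g j ^ (\<mu>(j := v)) j * (\<Prod>k\<in>A - {j}. g k ^ (\<mu>(j := v)) k)"
    by (rule prod.remove[OF assms])
  also have "(\<Prod>k\<in>A - {j}. g k ^ (\<mu>(j := v)) k) = (\<Prod>k\<in>A - {j}. g k ^ \<mu> k)"
    by (rule prod.cong) auto
  finally show ?thesis by simp
qed

lemma Pm_upd:
  assumes "j < length X"
  shows "Pm X (\<mu>(j := \<mu> j + 1)) = lin (X ! j) * Pm X \<mu>"
proof -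
  have A: "finite {..<length X}" "j \<in> {..<length X}" using assms by auto
  have "Pm X (\<mu>(j := \<mu> j + 1)) = lin (X ! j) ^ (\<mu> j + 1) * (\<Prod>k\<in>{..<length X} - {j}. lin (X ! k) ^ \<mu> k)"
    unfolding Pm_def by (rule prod_upd[OF A])
  moreover have "Pm X \<mu> = lin (X ! j) ^ (\<mu> j) * (\<Prod>k\<in>{..<length X} - {j}. lin (X ! k) ^ \<mu> k)"
    unfolding Pm_def using prod_upd[OF A, of "\<lambda>k. lin (X ! k)" \<mu> "\<mu> j"] by simp
  ultimately show ?thesis by (simp add: mult.assoc)
qed

lemma sum_upd:
  assumes "finite A" "j \<in> A"
  shows "sum (\<mu>(j := v)) A = v + sum \<mu> (A - {j})"
proof -
  have "sum (\<mu>(j := v)) A = (\<mu>(j := v)) j + sum (\<mu>(j := v)) (A - {j})"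
    by (rule sum.remove[OF assms])
  also have "sum (\<mu>(j := v)) (A - {j}) = sum \<mu> (A - {j})" by (rule sum.cong) auto
  finally show ?thesis by simp
qed

lemma cocirc_main:
  fixes X :: "(real^'n) list"
  assumes sp: "span (set X) = UNIV" and TC: "\<And>C. cocircuit X C \<Longrightarrow> C \<in> T"
  shows "sum \<mu> {..<length X} \<ge> length X + 1 \<Longrightarrow> Pm X \<mu> \<in> ideal_gen (prodA X ` T)"
proof (induction "card {j. j < length X \<and> \<mu> j = 0}" arbitrary: \<mu> rule: less_induct)
  case less
  define n where "n = length X"
  define Z where "Z = {j. j < n \<and> \<mu> j = 0}"
  have fZ: "finite Z" unfolding Z_def by simp
  show ?case
  proof (cases "span ((\<lambda>j. X ! j) ` Z) = UNIV")
    case False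
    have sub: "(\<lambda>j. X ! j) ` Z \<subseteq> set X" unfolding Z_def n_def by auto
    obtain S' where S': "S' \<subseteq> set X" "(\<lambda>j. X ! j) ` Z \<subseteq> span S'" "dim (span S') = CARD('n) - 1"
      using hyper_exists[OF sub False sp] by blast
    define C where "C = {i. i < length X \<and> X ! i \<notin> span S'}"
    have "cocircuit X C" unfolding cocircuit_def C_def using S'(1,3) by blast
    then have CT: "C \<in> T" by (rule TC)
    have CS: "\<mu> j \<ge> 1" if "j \<in> C" for j
    proof (rule ccontr)
      assume "\<not> 1 \<le> \<mu> j"
      then have "j \<in> Z" using that unfolding Z_def C_def n_def by auto
      then have "X ! j \<in> span S'" using S'(2) by blast
      then show False using that unfolding C_def by blast
    qed
    have Csub: "C \<subseteq> {..<n}" unfolding C_def n_def by auto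
    define R where "R = (\<Prod>j<n. lin (X ! j) ^ (\<mu> j - (if j \<in> C then 1 else 0)))"
    have "Pm X \<mu> = (\<Prod>j<n. lin (X ! j) ^ (if j \<in> C then 1 else 0) * lin (X ! j) ^ (\<mu> j - (if j \<in> C then 1 else 0)))"
      unfolding Pm_def n_def[symmetric]
    proof (rule prod.cong[OF refl])
      fix j assume "j \<in> {..<n}"
      have "\<mu> j = (if j \<in> C then 1 else 0) + (\<mu> j - (if j \<in> C then 1 else 0))" using CS[of j] by auto
      then show "lin (X ! j) ^ \<mu> j = lin (X ! j) ^ (if j \<in> C then 1 else 0) * lin (X ! j) ^ (\<mu> j - (if j \<in> C then 1 else 0))"
        by (metis power_add)
    qed
    also have "\<dots> = (\<Prod>j<n. lin (X ! j) ^ (if j \<in> C then 1 else 0)) * R"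
      unfolding R_def by (rule prod.distrib)
    also have "(\<Prod>j<n. lin (X ! j) ^ (if j \<in> C then 1 else 0)) = (\<Prod>j<n. if j \<in> C then lin (X ! j) else 1)"
      by (rule prod.cong) auto
    also have "\<dots> = (\<Prod>j\<in>{..<n} \<inter> C. lin (X ! j))"
      by (rule prod.inter_restrict[symmetric]) simp
    also have "\<dots> = prodA X C" unfolding prodA_def using Csub by (simp add: Int_absorb1)
    finally have "Pm X \<mu> = R * prodA X C" by (simp add: mult.commute)
    moreover have "prodA X C \<in> ideal_gen (prodA X ` T)" using CT by (intro ideal_gen_gen) blast
    ultimately show ?thesis by (simp add: ideal_gen_mult)
  next
    case True
    obtain j0 where j0: "j0 < n" "\<mu> j0 \<ge> 2"
    proof (rule ccontr)
      assume "\<not> thesis"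
      then have "\<forall>j\<in>{..<n}. \<mu> j \<le> 1" using that by force
      then have "sum \<mu> {..<n} \<le> card {..<n} * 1" using sum_bounded_above[of "{..<n}" \<mu> 1] by auto
      then show False using less.prems unfolding n_def by simp
    qed
    have j0Z: "j0 \<notin> Z" using j0 unfolding Z_def by auto
    have "X ! j0 \<in> span ((\<lambda>j. X ! j) ` Z)" using True by simp
    then obtain c where c: "X ! j0 = (\<Sum>j\<in>Z. c j *\<^sub>R X ! j)" using span_repr[OF fZ] by blast
    define \<mu>' where "\<mu>' = \<mu>(j0 := \<mu> j0 - 1)"
    have mu: "\<mu> = \<mu>'(j0 := \<mu>' j0 + 1)" unfolding \<mu>'_def using j0 by auto
    have "Pm X \<mu> = lin (X ! j0) * Pm X \<mu>'" using Pm_upd[of j0 X \<mu>'] j0(1) mu unfolding n_def by simp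
    also have "\<dots> = (\<Sum>j\<in>Z. pconst (c j) * (lin (X ! j) * Pm X \<mu>'))"
      unfolding c lin_sum by (simp add: sum_distrib_right mult.assoc)
    also have "\<dots> = (\<Sum>j\<in>Z. pconst (c j) * Pm X (\<mu>'(j := \<mu>' j + 1)))"
      by (rule sum.cong[OF refl]) (simp add: Pm_upd[simplified] Z_def n_def)
    finally have eq: "Pm X \<mu> = (\<Sum>j\<in>Z. pconst (c j) * Pm X (\<mu>'(j := \<mu>' j + 1)))" .
    have "Pm X (\<mu>'(j := \<mu>' j + 1)) \<in> ideal_gen (prodA X ` T)" if jZ: "j \<in> Z" for j
    proof -
      define \<nu> where "\<nu> = \<mu>'(j := \<mu>' j + 1)"
      have jn: "j < n" "\<mu> j = 0" "j \<noteq> j0" using jZ j0Z unfolding Z_def by auto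
      have zs: "{k. k < length X \<and> \<nu> k = 0} = Z - {j}"
        unfolding \<nu>_def \<mu>'_def Z_def n_def using j0 jn by (auto simp: n_def)
      have "card (Z - {j}) < card Z" using fZ jZ by (rule card_Diff1_less)
      then have lt: "card {k. k < length X \<and> \<nu> k = 0} < card {j. j < length X \<and> \<mu> j = 0}"
        unfolding zs Z_def n_def by simp
      have A: "finite {..<n}" "j \<in> {..<n}" "j0 \<in> {..<n}" using jn j0 by auto
      have s1: "sum \<nu> {..<n} = (\<mu>' j + 1) + sum \<mu>' ({..<n} - {j})"
        unfolding \<nu>_def by (rule sum_upd[OF A(1,2)])
      have s2: "sum \<mu>' {..<n} = \<mu>' j + sum \<mu>' ({..<n} - {j})"
        by (rule sum.remove[OF A(1,2)])
      have s3: "sum \<mu>' {..<n} = (\<mu> j0 - 1) + sum \<mu> ({..<n} - {j0})"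
        unfolding \<mu>'_def by (rule sum_upd[OF A(1,3)])
      have s4: "sum \<mu> {..<n} = \<mu> j0 + sum \<mu> ({..<n} - {j0})"
        by (rule sum.remove[OF A(1,3)])
      have "sum \<nu> {..<n} = sum \<mu> {..<n}" using s1 s2 s3 s4 j0(2) by simp
      then have "sum \<nu> {..<length X} \<ge> length X + 1" using less.prems unfolding n_def by simp
      from less.hyps[OF lt this] show ?thesis unfolding \<nu>_def .
    qed
    then show ?thesis unfolding eq by (intro ideal_gen_sum ideal_gen_mult)
  qed
qed

lemma list_main:
  fixes X :: "(real^'n) list"
  assumes sp: "span (set X) = UNIV" and TC: "\<And>C. cocircuit X C \<Longrightarrow> C \<in> T"
  shows "sum \<mu> {..<length X} + length ws \<ge> length X + 1 \<Longrightarrow>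
    Pm X \<mu> * prod_list (map lin ws) \<in> ideal_gen (prodA X ` T)"
proof (induction ws arbitrary: \<mu>)
  case Nil
  then show ?case using cocirc_main[OF sp TC, of \<mu>] by simp
next
  case (Cons w ws)
  have "set X = (\<lambda>j. X ! j) ` {..<length X}" by (auto simp: set_conv_nth)
  then have "w \<in> span ((\<lambda>j. X ! j) ` {..<length X})" using sp by simp
  then obtain c where c: "w = (\<Sum>j\<in>{..<length X}. c j *\<^sub>R X ! j)" using span_repr[of "{..<length X}"] by blast
  have "Pm X \<mu> * prod_list (map lin (w # ws)) = (\<Sum>j<length X. pconst (c j) * (Pm X (\<mu>(j := \<mu> j + 1)) * prod_list (map lin ws)))"
  proof -
    have e2: "lin w = (\<Sum>j<length X. pconst (c j) * lin (X ! j))" by (simp add: c lin_sum)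
    have "Pm X \<mu> * prod_list (map lin (w # ws)) = (\<Sum>j<length X. Pm X \<mu> * (pconst (c j) * lin (X ! j)) * prod_list (map lin ws))"
      by (simp add: e2 sum_distrib_left sum_distrib_right mult.assoc)
    also have "\<dots> = (\<Sum>j<length X. pconst (c j) * (Pm X (\<mu>(j := \<mu> j + 1)) * prod_list (map lin ws)))"
    proof (rule sum.cong[OF refl])
      fix j assume "j \<in> {..<length X}"
      then have "Pm X (\<mu>(j := \<mu> j + 1)) = lin (X ! j) * Pm X \<mu>" by (intro Pm_upd) simp
      then show "Pm X \<mu> * (pconst (c j) * lin (X ! j)) * prod_list (map lin ws) = pconst (c j) * (Pm X (\<mu>(j := \<mu> j + 1)) * prod_list (map lin ws))"
        by (simp only: ac_simps)
    qed
    finally show ?thesis .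
  qed
  also have "\<dots> \<in> ideal_gen (prodA X ` T)"
  proof (rule ideal_gen_sum, rule ideal_gen_mult)
    fix j assume j: "j \<in> {..<length X}"
    have "sum (\<mu>(j := \<mu> j + 1)) {..<length X} = sum \<mu> {..<length X} + 1"
      using sum_upd[of "{..<length X}" j \<mu> "\<mu> j + 1"] sum.remove[of "{..<length X}" j \<mu>] j by simp
    then show "Pm X (\<mu>(j := \<mu> j + 1)) * prod_list (map lin ws) \<in> ideal_gen (prodA X ` T)"
      using Cons.prems by (intro Cons.IH) simp
  qed
  finally show ?case .
qed

lemma prod_lin_ideal:
  fixes X :: "(real^'n) list"
  assumes sp: "span (set X) = UNIV" and TC: "\<And>C. cocircuit X C \<Longrightarrow> C \<in> T"
    and len: "length ws \<ge> length X + 1"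
  shows "prod_list (map lin ws) \<in> ideal_gen (prodA X ` T)"
  using list_main[OF sp TC, of "\<lambda>_. 0" ws] len by (simp add: Pm_def)



lemma line_deriv:
  assumes "\<forall>y. h differentiable (at y)"
  shows "DERIV (\<lambda>t. h (y + t *\<^sub>R w)) t :> ddir w h (y + t *\<^sub>R w)"
proof -
  have l: "linear (\<lambda>k. ddir k h (y + t *\<^sub>R w))"
    using has_derivative_linear[OF ddir_has_derivative] assms(1) by blast
  have "((\<lambda>t. h (y + t *\<^sub>R w)) has_derivative (\<lambda>r. ddir (r *\<^sub>R w) h (y + t *\<^sub>R w))) (at t)"
  proof -
    have a: "((\<lambda>t. t *\<^sub>R w + y) has_derivative (\<lambda>r. r *\<^sub>R w)) (at t)"
      by (rule has_derivative_add_const[OF bounded_linear_imp_has_derivative[OF bounded_linear_scaleR_left]])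
    have b: "(h has_derivative (\<lambda>k. ddir k h (t *\<^sub>R w + y))) (at (t *\<^sub>R w + y))"
      using assms(1) ddir_has_derivative by blast
    show ?thesis using has_derivative_compose[OF a b] by (simp add: add.commute)
  qed
  moreover have "(\<lambda>r. ddir (r *\<^sub>R w) h (y + t *\<^sub>R w)) = (*) (ddir w h (y + t *\<^sub>R w))"
    using l by (auto simp: linear_iff)
  ultimately show ?thesis by (simp add: has_field_derivative_def)
qed

lemma pact_lin_f:
  assumes "smooth f" "smooth g"
  shows "pact p (\<lambda>x. a * f x + b * g x) = (\<lambda>x. a * pact p f x + b * pact p g x)"
proof -
  have "dmon m (\<lambda>x. a * f x + b * g x) = (\<lambda>x. a * dmon m f x + b * dmon m g x)" for m
    unfolding dmon_mlist by (rule dirs_lin[OF assms])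
  then show ?thesis
    by (simp add: pact_def algebra_simps sum.distrib sum_distrib_left)
qed

lemma poly_determined:
  fixes X :: "(real^'n::finite) list" and h :: "real^'n \<Rightarrow> real"
  assumes sp: "span (set X) = UNIV" and TC: "\<And>C. cocircuit X C \<Longrightarrow> C \<in> T"
    and h: "smooth h"
    and hI: "\<And>p. p \<in> ideal_gen (prodA X ` T) \<Longrightarrow> pact p h = (\<lambda>x. 0)"
    and h0: "\<And>q. pact q h 0 = 0"
  shows "h x = 0"
proof -
  define N where "N = length X + 1"
  define diff where "diff k t = dirs (replicate k x) h (0 + t *\<^sub>R x)" for k t
  have dsm: "\<forall>y. dirs (replicate m x) h differentiable (at y)" for m
    using smooth_differentiable[OF smooth_dirs[OF h]] by blast
  have D: "\<forall>m t. m < N \<and> 0 \<le> t \<and> t \<le> 1 \<longrightarrow> DERIV (diff m) t :> diff (Suc m) t"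
  proof (intro allI impI)
    fix m t
    show "DERIV (diff m) t :> diff (Suc m) t"
      unfolding diff_def using line_deriv[OF dsm, of m 0 x t] by simp
  qed
  have pl: "dirs (replicate k x) h = pact (lin x ^ k) h" for k
    using pact_prod_list[OF h, of "replicate k x"] by simp
  obtain t where t: "0 < t" "t < 1"
    "diff 0 1 = (\<Sum>m<N. diff m 0 / fact m * 1 ^ m) + diff N t / fact N * 1 ^ N"
    using Maclaurin[of 1 N diff "diff 0"] D unfolding N_def by auto
  have z0: "diff m 0 = 0" for m unfolding diff_def pl using h0 by simp
  have "length X + 1 \<le> length (replicate N x)" unfolding N_def length_replicate by (rule order.refl)
  from prod_lin_ideal[OF sp TC this] have "lin x ^ N \<in> ideal_gen (prodA X ` T)" by simp
  then have zN: "diff N t = 0" unfolding diff_def pl using hI by simp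
  have "h x = diff 0 1" unfolding diff_def by simp
  also have "\<dots> = 0" using t(3) z0 zN by simp
  finally show ?thesis .
qed



locale phifun =
  fixes \<phi> :: "'n::finite spoly \<Rightarrow> real"
  assumes phi_add: "\<And>p q. \<phi> (p + q) = \<phi> p + \<phi> q"
    and phi_const: "\<And>c p. \<phi> (pconst c * p) = c * \<phi> p"
begin

lemma phi_zero: "\<phi> 0 = 0"
  using phi_const[of 0 0] by simp

lemma phi_sum: "\<phi> (\<Sum>i\<in>A. P i) = (\<Sum>i\<in>A. \<phi> (P i))"
  by (induction A rule: infinite_finite_induct) (simp_all add: phi_zero phi_add)

lemma phi_lin: "\<phi> (Q * lin y) = (\<Sum>i\<in>UNIV. y $ i * \<phi> (Q * pvar i))"
proof -
  have "Q * lin y = (\<Sum>i\<in>UNIV. pconst (y $ i) * (Q * pvar i))"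
    by (simp add: lin_def sum_distrib_left ac_simps)
  then show ?thesis by (simp add: phi_sum phi_const)
qed

lemma phi_power_deriv:
  "((\<lambda>x. \<phi> (p * lin x ^ k)) has_derivative (\<lambda>h. of_nat k * \<phi> (p * lin h * lin x ^ (k - 1)))) (at x)"
proof (induction k arbitrary: p x)
  case 0
  have "((\<lambda>x. \<phi> (p * lin x ^ 0)) has_derivative (\<lambda>h. 0)) (at x)" by simp
  then show ?case by simp
next
  case (Suc k)
  define G where "G i x = \<phi> (p * pvar i * lin x ^ k)" for i x
  have feq: "(\<lambda>x. \<phi> (p * lin x ^ Suc k)) = (\<lambda>x. \<Sum>i\<in>UNIV. x $ i * G i x)"
  proof
    fix x
    have "\<phi> (p * lin x ^ Suc k) = \<phi> ((p * lin x ^ k) * lin x)" by (simp only: power_Suc ac_simps)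
    also have "\<dots> = (\<Sum>i\<in>UNIV. x $ i * \<phi> ((p * lin x ^ k) * pvar i))" by (rule phi_lin)
    also have "\<dots> = (\<Sum>i\<in>UNIV. x $ i * G i x)" unfolding G_def by (simp only: ac_simps)
    finally show "\<phi> (p * lin x ^ Suc k) = (\<Sum>i\<in>UNIV. x $ i * G i x)" .
  qed
  have hd: "((\<lambda>x. \<Sum>i\<in>UNIV. x $ i * G i x) has_derivative
      (\<lambda>h. \<Sum>i\<in>UNIV. x $ i * (of_nat k * \<phi> (p * pvar i * lin h * lin x ^ (k - 1))) + h $ i * G i x)) (at x)"
  proof (rule has_derivative_sum)
    fix i :: 'n
    have a: "((\<lambda>x. x $ i) has_derivative (\<lambda>h. h $ i)) (at x)"
      by (rule bounded_linear_imp_has_derivative[OF bounded_linear_vec_nth])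
    have b: "(G i has_derivative (\<lambda>h. of_nat k * \<phi> (p * pvar i * lin h * lin x ^ (k - 1)))) (at x)"
      unfolding G_def by (rule Suc.IH)
    show "((\<lambda>x. x $ i * G i x) has_derivative
      (\<lambda>h. x $ i * (of_nat k * \<phi> (p * pvar i * lin h * lin x ^ (k - 1))) + h $ i * G i x)) (at x)"
      using has_derivative_mult[OF a b] .
  qed
  have deq: "(\<lambda>h. \<Sum>i\<in>UNIV. x $ i * (of_nat k * \<phi> (p * pvar i * lin h * lin x ^ (k - 1))) + h $ i * G i x)
      = (\<lambda>h. of_nat (Suc k) * \<phi> (p * lin h * lin x ^ (Suc k - 1)))"
  proof
    fix h
    have s1: "(\<Sum>i\<in>UNIV. h $ i * G i x) = \<phi> (p * lin h * lin x ^ k)"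
    proof -
      have "\<phi> ((p * lin x ^ k) * lin h) = (\<Sum>i\<in>UNIV. h $ i * G i x)"
        unfolding phi_lin G_def by (simp add: ac_simps)
      then show ?thesis by (simp add: ac_simps)
    qed
    have s2: "(\<Sum>i\<in>UNIV. x $ i * (of_nat k * \<phi> (p * pvar i * lin h * lin x ^ (k - 1)))) = of_nat k * \<phi> (p * lin h * lin x ^ k)"
    proof (cases k)
      case 0 then show ?thesis by simp
    next
      case (Suc j)
      have "\<phi> ((p * lin h * lin x ^ j) * lin x) = (\<Sum>i\<in>UNIV. x $ i * \<phi> (p * pvar i * lin h * lin x ^ j))"
        unfolding phi_lin by (simp add: ac_simps)
      moreover have "(p * lin h * lin x ^ j) * lin x = p * lin h * lin x ^ k" using Suc by (simp add: ac_simps)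
      ultimately show ?thesis using Suc by (simp add: sum_distrib_left ac_simps)
    qed
    show "(\<Sum>i\<in>UNIV. x $ i * (of_nat k * \<phi> (p * pvar i * lin h * lin x ^ (k - 1))) + h $ i * G i x)
      = of_nat (Suc k) * \<phi> (p * lin h * lin x ^ (Suc k - 1))"
      unfolding sum.distrib s1 s2 by (simp add: algebra_simps)
  qed
  show ?case using hd unfolding feq deq .
qed

end



lemma lin_axis: "lin (axis i 1 :: real^'n::finite) = pvar i"
proof -
  have "lin (axis i 1 :: real^'n) = (\<Sum>j\<in>UNIV. if j = i then pvar i else 0)"
    unfolding lin_def by (rule sum.cong) (auto simp: axis_def)
  then show ?thesis by simp
qed

lemma pvar_power: "pvar i ^ n = Poly_Mapping.single (Poly_Mapping.single i n) 1"
proof (induction n)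
  case 0 then show ?case by simp
next
  case (Suc n)
  have "pvar i ^ Suc n = pvar i * pvar i ^ n" by (rule power_Suc)
  also have "\<dots> = Poly_Mapping.single (Poly_Mapping.single i 1) 1 * Poly_Mapping.single (Poly_Mapping.single i n) 1"
    unfolding Suc.IH by (simp only: pvar_def)
  also have "\<dots> = Poly_Mapping.single (Poly_Mapping.single i 1 + Poly_Mapping.single i n) 1"
    by (simp only: mult_single mult_1)
  also have "Poly_Mapping.single i 1 + Poly_Mapping.single i n = Poly_Mapping.single i (Suc n)"
    by (simp only: single_add[symmetric] plus_1_eq_Suc)
  finally show ?case .
qed

lemma prod_single: "(\<Prod>i\<in>A. Poly_Mapping.single (g i) (1::real)) = Poly_Mapping.single (\<Sum>i\<in>A. g i) 1"
  by (induction A rule: infinite_finite_induct) (simp_all add: mult_single)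

lemma sum_single_lookup: "(\<Sum>i\<in>(UNIV::'n::finite set). Poly_Mapping.single i (Poly_Mapping.lookup m i)) = m"
proof (rule poly_mapping_eqI)
  fix k
  have "(\<Sum>i\<in>UNIV. Poly_Mapping.lookup (Poly_Mapping.single i (Poly_Mapping.lookup m i)) k)
      = (\<Sum>i\<in>UNIV. if i = k then Poly_Mapping.lookup m k else 0)"
    by (rule sum.cong) (auto simp: lookup_single when_def)
  then show "Poly_Mapping.lookup (\<Sum>i\<in>UNIV. Poly_Mapping.single i (Poly_Mapping.lookup m i)) k = Poly_Mapping.lookup m k"
    by (simp add: lookup_sum)
qed

lemma prod_list_concat_rep:
  "prod_list (map lin (concat (map (\<lambda>i. replicate (l i) (axis i 1)) cl))) = prod_list (map (\<lambda>i. pvar i ^ l i) cl)"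
  by (induction cl) (simp_all add: lin_axis)

lemma prod_mlist: "prod_list (map lin (mlist m)) = Poly_Mapping.single m (1::real)"
proof -
  have "prod_list (map lin (mlist m)) = prod_list (map (\<lambda>i. pvar i ^ Poly_Mapping.lookup m i) coord_list)"
    unfolding mlist_def by (rule prod_list_concat_rep)
  also have "\<dots> = (\<Prod>i\<in>set coord_list. pvar i ^ Poly_Mapping.lookup m i)"
    by (rule prod.distinct_set_conv_list[OF coord_list(2), symmetric])
  also have "\<dots> = (\<Prod>i\<in>UNIV. Poly_Mapping.single (Poly_Mapping.single i (Poly_Mapping.lookup m i)) 1)"
    by (simp add: coord_list(1) pvar_power)
  also have "\<dots> = Poly_Mapping.single m 1" by (simp add: prod_single sum_single_lookup)
  finally show ?thesis .
qed

locale phiN = phifun \<phi> for \<phi> :: "'n::finite spoly \<Rightarrow> real" +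
  fixes M :: nat
  assumes phi_kill: "\<And>p v x. \<phi> (p * lin v * lin x ^ M) = 0"
begin

definition F :: "'n spoly \<Rightarrow> real^'n \<Rightarrow> real" where
  "F p x = (\<Sum>k<Suc M. inverse (fact k) * \<phi> (p * lin x ^ k))"

lemma F_deriv: "(F p has_derivative (\<lambda>h. \<Sum>k<Suc M. inverse (fact k) * (of_nat k * \<phi> (p * lin h * lin x ^ (k - 1))))) (at x)"
  unfolding F_def[abs_def]
  by (intro has_derivative_sum has_derivative_mult_right phi_power_deriv)

lemma ddir_F: "ddir v (F p) = F (p * lin v)"
proof
  fix x
  have "ddir v (F p) x = (\<Sum>k<Suc M. inverse (fact k) * (of_nat k * \<phi> (p * lin v * lin x ^ (k - 1))))"
    by (rule ddir_eqI[OF F_deriv])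
  also have "\<dots> = (\<Sum>j<M. inverse (fact (Suc j)) * (of_nat (Suc j) * \<phi> (p * lin v * lin x ^ j)))"
    by (subst sum.lessThan_Suc_shift) simp
  also have "\<dots> = (\<Sum>j<M. inverse (fact j) * \<phi> (p * lin v * lin x ^ j))"
  proof (rule sum.cong[OF refl])
    fix j
    have ne: "(of_nat (Suc j)::real) \<noteq> 0" by (rule of_nat_neq_0)
    have "inverse (fact (Suc j) :: real) * of_nat (Suc j) = inverse (of_nat (Suc j) * fact j) * of_nat (Suc j)"
      by (simp only: fact_Suc)
    also have "\<dots> = inverse (fact j)" using ne by (simp add: inverse_mult_distrib)
    finally have "inverse (fact (Suc j) :: real) * of_nat (Suc j) = inverse (fact j)" .
    then show "inverse (fact (Suc j)) * (of_nat (Suc j) * \<phi> (p * lin v * lin x ^ j)) = inverse (fact j) * \<phi> (p * lin v * lin x ^ j)"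
      by (metis mult.assoc)
  qed
  also have "\<dots> = F (p * lin v) x"
    unfolding F_def by (simp add: phi_kill)
  finally show "ddir v (F p) x = F (p * lin v) x" .
qed

lemma smooth_F: "smooth (F p)"
proof (rule smooth_coI[where P="\<lambda>h. \<exists>p. h = F p"])
  show "\<exists>p'. F p = F p'" by blast
next
  fix h assume "\<exists>p. h = F p"
  then obtain p where h: "h = F p" by blast
  have "\<forall>x. h differentiable (at x)" unfolding h using F_deriv differentiable_def by blast
  moreover have "\<forall>v. \<exists>p. ddir v h = F p" unfolding h ddir_F by blast
  ultimately show "(\<forall>x. h differentiable (at x)) \<and> (\<forall>v. (\<exists>p. ddir v h = F p) \<or> smooth (ddir v h))" by blast
qed

lemma dirs_F: "dirs L (F p) = F (p * prod_list (map lin L))"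
  by (induction L) (simp_all add: ddir_F ac_simps)

lemma F_add: "F (p + q) x = F p x + F q x"
  by (simp add: F_def distrib_right phi_add sum.distrib distrib_left)

lemma F_const: "F (pconst c * p) x = c * F p x"
  unfolding F_def mult.assoc phi_const by (simp add: sum_distrib_left distrib_left ac_simps)

lemma F_zero: "F 0 x = 0"
  by (simp add: F_def phi_zero)

lemma F_sum: "F (\<Sum>i\<in>A. P i) x = (\<Sum>i\<in>A. F (P i) x)"
  by (induction A rule: infinite_finite_induct) (simp_all add: F_zero F_add)

lemma pact_F: "pact q (F p) = F (p * q)"
proof
  fix x
  have dm: "dmon m (F p) = F (p * Poly_Mapping.single m 1)" for m
    by (simp add: dmon_mlist dirs_F prod_mlist)
  have "pact q (F p) x = (\<Sum>m\<in>Poly_Mapping.keys q. F (pconst (Poly_Mapping.lookup q m) * (p * Poly_Mapping.single m 1)) x)"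
    by (simp add: pact_def dm F_const)
  also have "\<dots> = F (\<Sum>m\<in>Poly_Mapping.keys q. pconst (Poly_Mapping.lookup q m) * (p * Poly_Mapping.single m 1)) x"
    by (rule F_sum[symmetric])
  also have "(\<Sum>m\<in>Poly_Mapping.keys q. pconst (Poly_Mapping.lookup q m) * (p * Poly_Mapping.single m 1)) = p * q"
  proof -
    have "(\<Sum>m\<in>Poly_Mapping.keys q. pconst (Poly_Mapping.lookup q m) * (p * Poly_Mapping.single m 1))
        = p * (\<Sum>m\<in>Poly_Mapping.keys q. Poly_Mapping.single m (Poly_Mapping.lookup q m))"
      by (simp add: sum_distrib_left pconst_def mult_single ac_simps)
    then show ?thesis using poly_expand[of q] by simp
  qed
  finally show "pact q (F p) x = F (p * q) x" .
qed

lemma F_at_0: "F p 0 = \<phi> p"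
proof -
  have "F p 0 = (\<Sum>k<Suc M. inverse (fact k) * \<phi> (p * 0 ^ k))" by (simp add: F_def)
  also have "\<dots> = (\<Sum>k\<in>{0}. inverse (fact k) * \<phi> (p * 0 ^ k))"
    by (rule sum.mono_neutral_right) (auto simp: phi_zero power_0_left)
  finally show ?thesis by simp
qed

end



lemma DT_pact_ideal:
  fixes X :: "(real^'n::finite) list"
  assumes T_sub: "T \<subseteq> Pow {..<length X}" and f: "f \<in> D_T X T" and p: "p \<in> ideal_gen (prodA X ` T)"
  shows "pact p f = (\<lambda>x. 0)"
proof -
  have sf: "smooth f" using f by (simp add: D_T_def)
  have "\<forall>g\<in>prodA X ` T. pact g f = (\<lambda>x. 0)"
  proof
    fix g assume "g \<in> prodA X ` T"
    then obtain A where A: "A \<in> T" "g = prodA X A" by blast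
    have "A \<subseteq> {..<length X}" using A(1) T_sub by blast
    then have "finite A" using finite_subset by blast
    then have "pact g f = dirs (map (\<lambda>i. X ! i) (sorted_list_of_set A)) f"
      unfolding A(2) by (rule pact_prodA[OF sf])
    also have "\<dots> = (\<lambda>x. 0)" using f A(1) by (simp add: D_T_def)
    finally show "pact g f = (\<lambda>x. 0)" .
  qed
  then show ?thesis by (rule pact_ideal[OF sf _ p])
qed

theorem lemma3p2:
  fixes X :: "(real^'n) list" and T :: "nat set set"
  assumes nonzero: "\<forall>a\<in>set X. a \<noteq> 0"
    and lattice: "\<forall>a\<in>set X. \<forall>i. a $ i \<in> \<int>"
    and spans: "span (set X) = UNIV"
    and T_sub: "T \<subseteq> Pow {..<length X}"
    and T_up: "\<And>A B. A \<in> T \<Longrightarrow> A \<subseteq> B \<Longrightarrow> B \<subseteq> {..<length X} \<Longrightarrow> B \<in> T"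
    and T_cocirc: "\<And>C. cocircuit X C \<Longrightarrow> C \<in> T"
  shows "\<exists>\<Phi>. bij_betw \<Phi> (D_T X T) (Hom_DstarT X T)
     \<and> (\<forall>f\<in>D_T X T. \<forall>g\<in>D_T X T. \<Phi> (\<lambda>x. f x + g x) = (\<lambda>q. \<Phi> f q + \<Phi> g q))
     \<and> (\<forall>f\<in>D_T X T. \<forall>c. \<Phi> (\<lambda>x. c * f x) = (\<lambda>q. c * \<Phi> f q))
     \<and> (\<forall>f\<in>D_T X T. \<forall>p. \<Phi> (pact p f) = (\<lambda>q. \<Phi> f (p * q)))"
proof -
  define I where "I = ideal_gen (prodA X ` T)"
  define \<Phi> where "\<Phi> f = (\<lambda>q. pact q f 0)" for f :: "real^'n \<Rightarrow> real"
  have sm: "smooth f" if "f \<in> D_T X T" for f using that by (simp add: D_T_def)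
  have vanish: "pact p f = (\<lambda>x. 0)" if "f \<in> D_T X T" "p \<in> I" for f p
    using that(2) unfolding I_def by (rule DT_pact_ideal[OF T_sub that(1)])
  have into: "\<Phi> f \<in> Hom_DstarT X T" if f: "f \<in> D_T X T" for f
    unfolding Hom_DstarT_def \<Phi>_def
  proof (intro CollectI conjI allI ballI)
    fix p q show "pact (p + q) f 0 = pact p f 0 + pact q f 0" by (simp add: pact_add)
  next
    fix c p show "pact (pconst c * p) f 0 = c * pact p f 0" by (simp add: pact_pconst)
  next
    fix p assume "p \<in> ideal_gen (prodA X ` T)"
    then show "pact p f 0 = 0" using vanish[OF f, of p] unfolding I_def by simp
  qed
  have inj: "inj_on \<Phi> (D_T X T)"
  proof (rule inj_onI)
    fix f g assume f: "f \<in> D_T X T" and g: "g \<in> D_T X T" and eq: "\<Phi> f = \<Phi> g"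
    define h where "h = (\<lambda>x. 1 * f x + (-1) * g x)"
    have ph: "pact p h = (\<lambda>x. 1 * pact p f x + (-1) * pact p g x)" for p
      unfolding h_def by (rule pact_lin_f[OF sm[OF f] sm[OF g]])
    have sh: "smooth h" unfolding h_def by (rule smooth_lin[OF sm[OF f] sm[OF g]])
    have hI: "pact p h = (\<lambda>x. 0)" if "p \<in> ideal_gen (prodA X ` T)" for p
      using vanish[OF f, of p] vanish[OF g, of p] that unfolding ph I_def by simp
    have h0: "pact q h 0 = 0" for q
      using fun_cong[OF eq, of q] unfolding ph \<Phi>_def by simp
    have "h x = 0" for x by (rule poly_determined[OF spans T_cocirc sh hI h0])
    then show "f = g" unfolding h_def by auto
  qed
  have surj: "\<exists>f\<in>D_T X T. \<Phi> f = \<phi>" if \<phi>: "\<phi> \<in> Hom_DstarT X T" for \<phi>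
  proof -
    have pa: "\<And>p q. \<phi> (p + q) = \<phi> p + \<phi> q" and pc: "\<And>c p. \<phi> (pconst c * p) = c * \<phi> p"
      and pI: "\<And>p. p \<in> I \<Longrightarrow> \<phi> p = 0"
      using \<phi> unfolding Hom_DstarT_def I_def by auto
    have pk: "\<phi> (p * lin v * lin x ^ length X) = 0" for p v x
    proof -
      have "length X + 1 \<le> length (v # replicate (length X) x)" by simp
      from prod_lin_ideal[OF spans T_cocirc this]
      have "lin v * lin x ^ length X \<in> I" unfolding I_def by simp
      then have "p * (lin v * lin x ^ length X) \<in> I" unfolding I_def by (rule ideal_gen_mult)
      then show ?thesis using pI by (simp add: mult.assoc)
    qed
    interpret phiN \<phi> "length X"
      by unfold_locales (use pa pc pk in auto)
    have sF: "smooth (F 1)" by (rule smooth_F)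
    have "F 1 \<in> D_T X T"
      unfolding D_T_def
    proof (intro CollectI conjI ballI sF)
      fix A assume A: "A \<in> T"
      have "A \<subseteq> {..<length X}" using A T_sub by blast
      then have fA: "finite A" using finite_subset by blast
      have "dirs (map (\<lambda>i. X ! i) (sorted_list_of_set A)) (F 1) = pact (prodA X A) (F 1)"
        by (rule pact_prodA[OF sF fA, symmetric])
      also have "\<dots> = F (prodA X A)" by (simp add: pact_F)
      also have "\<dots> = (\<lambda>x. 0)"
      proof
        fix x
        have "prodA X A * lin x ^ k \<in> I" for k
        proof -
          have "prodA X A \<in> I" unfolding I_def using A by (intro ideal_gen_gen) blast
          then show ?thesis unfolding I_def by (subst mult.commute) (rule ideal_gen_mult)
        qed
        then show "F (prodA X A) x = 0" unfolding F_def using pI by simp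
      qed
      finally show "dirs (map (\<lambda>i. X ! i) (sorted_list_of_set A)) (F 1) = (\<lambda>x. 0)" .
    qed
    moreover have "\<Phi> (F 1) = \<phi>"
      unfolding \<Phi>_def by (rule ext) (simp add: pact_F F_at_0)
    ultimately show ?thesis by blast
  qed
  have bij: "bij_betw \<Phi> (D_T X T) (Hom_DstarT X T)"
    unfolding bij_betw_def
  proof (intro conjI inj subset_antisym subsetI)
    fix y assume "y \<in> \<Phi> ` D_T X T"
    then obtain f where "f \<in> D_T X T" "y = \<Phi> f" by blast
    then show "y \<in> Hom_DstarT X T" using into by simp
  next
    fix y assume "y \<in> Hom_DstarT X T"
    then obtain f where "f \<in> D_T X T" "\<Phi> f = y" using surj by blast
    then show "y \<in> \<Phi> ` D_T X T" by blast
  qed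
  have c1: "\<forall>f\<in>D_T X T. \<forall>g\<in>D_T X T. \<Phi> (\<lambda>x. f x + g x) = (\<lambda>q. \<Phi> f q + \<Phi> g q)"
  proof (intro ballI)
    fix f g assume f: "f \<in> D_T X T" and g: "g \<in> D_T X T"
    have "pact q (\<lambda>x. 1 * f x + 1 * g x) = (\<lambda>x. 1 * pact q f x + 1 * pact q g x)" for q
      by (rule pact_lin_f[OF sm[OF f] sm[OF g]])
    then show "\<Phi> (\<lambda>x. f x + g x) = (\<lambda>q. \<Phi> f q + \<Phi> g q)" unfolding \<Phi>_def by simp
  qed
  have c2: "\<forall>f\<in>D_T X T. \<forall>c. \<Phi> (\<lambda>x. c * f x) = (\<lambda>q. c * \<Phi> f q)"
  proof (intro ballI allI)
    fix f c assume f: "f \<in> D_T X T"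
    have "pact q (\<lambda>x. c * f x + 0 * f x) = (\<lambda>x. c * pact q f x + 0 * pact q f x)" for q
      by (rule pact_lin_f[OF sm[OF f] sm[OF f]])
    then show "\<Phi> (\<lambda>x. c * f x) = (\<lambda>q. c * \<Phi> f q)" unfolding \<Phi>_def by simp
  qed
  have c3: "\<forall>f\<in>D_T X T. \<forall>p. \<Phi> (pact p f) = (\<lambda>q. \<Phi> f (p * q))"
  proof (intro ballI allI)
    fix f p assume f: "f \<in> D_T X T"
    have "pact q (pact p f) = pact (p * q) f" for q
      using pact_mult[OF sm[OF f], of q p] by (simp add: mult.commute)
    then show "\<Phi> (pact p f) = (\<lambda>q. \<Phi> f (p * q))" unfolding \<Phi>_def by simp
  qed
  show ?thesis by (rule exI[of _ \<Phi>]) (intro conjI bij c1 c2 c3)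
qed


end
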